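(* Let $(\mathcal G,\Theta)$ be a Lie triple system with a decomposition $\mathcal G=\mathfrak g_1\oplus\mathfrak g_2$ and $H:\mathfrak g_2\to\mathfrak g_1$ a linear map. Then the linear map $\exp(\hat H)=\mathrm{Id}+\hat H:(\mathcal G,\Theta^H)\to(\mathcal G,\Theta)$, $(x,u)\mapsto(x+H(u),u)$, is an isomorphism of Lie triple systems.
   Context: All vector spaces are over a field of characteristic $0$. A Lie triple system is a vector space with a trilinear bracket satisfying $[x,x,y]=0$, $[x,y,z]+[y,z,x]+[z,x,y]=0$ and $[x,y,[z,w,t]]=[[x,y,z],w,t]+[z,[x,y,w],t]+[z,w,[x,y,t]]$. Cochains: $C^p(\mathcal G,\mathcal G)=\mathrm{Hom}(\otimes^{2p+1}\mathcal G,\mathcal G)$, arguments $(\mathfrak X_1,\dots,\mathfrak X_p,x)$, $\mathfrak X_i=x_i\otimes y_i$; for $P\in C^p,Q\in C^q$, $(P\circ Q)(\mathfrak X_1,\dots,\mathfrak X_{p+q},x)=\sum_{k=1}^p(-1)^{(k-1)q}\sum_{\sigma\in\mathbb S(k-1,q)}(-1)^\sigma P(\mathfrak X_{\sigma(1)},\dots,\mathfrak X_{\sigma(k-1)},Q(\mathfrak X_{\sigma(k)},\dots,\mathfrak X_{\sigma(k+q-1)},x_{k+q})\otimes y_{k+q},\mathfrak X_{k+q+1},\dots,x)+\sum_{k=1}^p(-1)^{(k-1)q}\sum_{\sigma\in\mathbb S(k-1,q)}(-1)^\sigma P(\mathfrak X_{\sigma(1)},\dots,\mathfrak X_{\sigma(k-1)},x_{k+q}\otimes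 Q(\mathfrak X_{\sigma(k)},\dots,\mathfrak X_{\sigma(k+q-1)},y_{k+q}),\mathfrak X_{k+q+1},\dots,x)+\sum_{\sigma\in\mathbb S(p,q)}(-1)^\sigma P(\mathfrak X_{\sigma(1)},\dots,\mathfrak X_{\sigma(p)},Q(\mathfrak X_{\sigma(p+1)},\dots,\mathfrak X_{\sigma(p+q)},x))$ and $[P,Q]_{\mathsf{LTS}}=P\circ Q-(-1)^{pq}Q\circ P$. $\hat H(x,u)=(H(u),0)$, $X_{\hat H}(\cdot)=[\cdot,\hat H]_{\mathsf{LTS}}$, and the twisting is $\Theta^H=\sum_{k\ge0}\frac1{k!}X_{\hat H}^k(\Theta)$ (finite sum), a Lie triple system bracket on $\mathcal G$. *)

theory Defs
  imports Complex_Main "HOL-Library.Product_Plus" "HOL-Combinatorics.Permutations"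
begin

text \<open>The space G = g1 (+) g2 is the
  product type 'a \<times> 'b with componentwise scalar multiplication.\<close>

definition prod_scale :: "('k \<Rightarrow> 'a \<Rightarrow> 'a) \<Rightarrow> ('k \<Rightarrow> 'b \<Rightarrow> 'b) \<Rightarrow> 'k \<Rightarrow> 'a \<times> 'b \<Rightarrow> 'a \<times> 'b" where
  "prod_scale s1 s2 c v = (s1 c (fst v), s2 c (snd v))"

definition trilinear :: "('k::field \<Rightarrow> 'v::ab_group_add \<Rightarrow> 'v) \<Rightarrow> ('v \<Rightarrow> 'v \<Rightarrow> 'v \<Rightarrow> 'v) \<Rightarrow> bool" where
  "trilinear sc T \<longleftrightarrow>
     (\<forall>y z. Vector_Spaces.linear sc sc (\<lambda>x. T x y z)) \<and>
     (\<forall>x z. Vector_Spaces.linear sc sc (\<lambda>y. T x y z)) \<and>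
     (\<forall>x y. Vector_Spaces.linear sc sc (\<lambda>z. T x y z))"

definition is_LTS :: "('k::field \<Rightarrow> 'v::ab_group_add \<Rightarrow> 'v) \<Rightarrow> ('v \<Rightarrow> 'v \<Rightarrow> 'v \<Rightarrow> 'v) \<Rightarrow> bool" where
  "is_LTS sc T \<longleftrightarrow> trilinear sc T \<and>
     (\<forall>x y. T x x y = 0) \<and>
     (\<forall>x y z. T x y z + T y z x + T z x y = 0) \<and>
     (\<forall>x y z w t. T x y (T z w t) = T (T x y z) w t + T z (T x y w) t + T z w (T x y t))"

definition LTS_iso :: "('k::field \<Rightarrow> 'v::ab_group_add \<Rightarrow> 'v) \<Rightarrow> ('v \<Rightarrow> 'v \<Rightarrow> 'v \<Rightarrow> 'v)
    \<Rightarrow> ('v \<Rightarrow> 'v \<Rightarrow> 'v \<Rightarrow> 'v) \<Rightarrow> ('v \<Rightarrow> 'v) \<Rightarrow> bool" where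
  "LTS_iso sc T1 T2 f \<longleftrightarrow> is_LTS sc T1 \<and> is_LTS sc T2 \<and>
     Vector_Spaces.linear sc sc f \<and> bij f \<and>
     (\<forall>x y z. f (T1 x y z) = T2 (f x) (f y) (f z))"

text \<open>Cochains C^p(G,G) are represented as functions on argument lists
  [x1, y1, ..., xp, yp, x] of length 2p+1 (pairs X_i = x_i \<otimes> y_i, 0-indexed below).\<close>

definition shuffles :: "nat \<Rightarrow> nat \<Rightarrow> (nat \<Rightarrow> nat) set" where
  "shuffles n m = {\<sigma>. \<sigma> permutes {..<n+m} \<and>
     (\<forall>i j. i < j \<and> j < n \<longrightarrow> \<sigma> i < \<sigma> j) \<and>
     (\<forall>i j. n \<le> i \<and> i < j \<and> j < n+m \<longrightarrow> \<sigma> i < \<sigma> j)}"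

definition argpair :: "'v list \<Rightarrow> nat \<Rightarrow> 'v \<times> 'v" where
  "argpair xs i = (xs ! (2*i), xs ! (2*i+1))"

definition mk_args :: "('v \<times> 'v) list \<Rightarrow> 'v \<Rightarrow> 'v list" where
  "mk_args ps x = concat (map (\<lambda>(a,b). [a,b]) ps) @ [x]"

definition circ :: "('k::field \<Rightarrow> 'v::ab_group_add \<Rightarrow> 'v) \<Rightarrow> nat \<Rightarrow> nat
    \<Rightarrow> ('v list \<Rightarrow> 'v) \<Rightarrow> ('v list \<Rightarrow> 'v) \<Rightarrow> 'v list \<Rightarrow> 'v" where
  "circ sc p q P Q xs =
    (\<Sum>k\<in>{1..p}. sc ((-1) ^ ((k-1)*q))
       (\<Sum>\<sigma>\<in>shuffles (k-1) q. sc (of_int (sign \<sigma>))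
          (let ps1 = map (\<lambda>i. argpair xs (\<sigma> i)) [0..<k-1];
               bs = map (\<lambda>i. argpair xs (\<sigma> i)) [k-1..<k-1+q];
               cs = map (argpair xs) [k+q..<p+q];
               pk = argpair xs (k+q-1);
               x0 = xs ! (2*(p+q))
           in P (mk_args (ps1 @ [(Q (mk_args bs (fst pk)), snd pk)] @ cs) x0)
            + P (mk_args (ps1 @ [(fst pk, Q (mk_args bs (snd pk)))] @ cs) x0))))
   + (\<Sum>\<sigma>\<in>shuffles p q. sc (of_int (sign \<sigma>))
        (P (mk_args (map (\<lambda>i. argpair xs (\<sigma> i)) [0..<p])
              (Q (mk_args (map (\<lambda>i. argpair xs (\<sigma> i)) [p..<p+q]) (xs ! (2*(p+q))))))))"

definition LTS_bracket :: "('k::field \<Rightarrow> 'v::ab_group_add \<Rightarrow> 'v) \<Rightarrow> nat \<Rightarrow> nat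
    \<Rightarrow> ('v list \<Rightarrow> 'v) \<Rightarrow> ('v list \<Rightarrow> 'v) \<Rightarrow> 'v list \<Rightarrow> 'v" where
  "LTS_bracket sc p q P Q xs = circ sc p q P Q xs - sc ((-1) ^ (p*q)) (circ sc q p Q P xs)"

text \<open>\<^emph>\<open>H-hat\<close> as a 0-cochain: (x,u) \<mapsto> (H u, 0).\<close>
definition hatH :: "('b::zero \<Rightarrow> 'a) \<Rightarrow> ('a \<times> 'b) list \<Rightarrow> 'a \<times> 'b" where
  "hatH H xs = (H (snd (xs ! 0)), 0)"

definition X_hatH :: "('k::field \<Rightarrow> 'a::ab_group_add \<times> 'b::ab_group_add \<Rightarrow> 'a \<times> 'b) \<Rightarrow> ('b \<Rightarrow> 'a)
    \<Rightarrow> nat \<Rightarrow> (('a \<times> 'b) list \<Rightarrow> 'a \<times> 'b) \<Rightarrow> ('a \<times> 'b) list \<Rightarrow> 'a \<times> 'b" where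
  "X_hatH sc H p P = LTS_bracket sc p 0 P (hatH H)"

definition theta_cochain :: "('v \<Rightarrow> 'v \<Rightarrow> 'v \<Rightarrow> 'v) \<Rightarrow> 'v list \<Rightarrow> 'v" where
  "theta_cochain T xs = T (xs ! 0) (xs ! 1) (xs ! 2)"

text \<open>The twisted bracket Theta^H = \<Sum>_k 1/k! X_Hhat^k(Theta): the sum ranges over the
  (finitely many) k for which X_Hhat^k(Theta) is a nonzero 1-cochain.\<close>
definition twist :: "('k::field_char_0 \<Rightarrow> 'a::ab_group_add \<times> 'b::ab_group_add \<Rightarrow> 'a \<times> 'b) \<Rightarrow> ('b \<Rightarrow> 'a)
    \<Rightarrow> ('a \<times> 'b \<Rightarrow> 'a \<times> 'b \<Rightarrow> 'a \<times> 'b \<Rightarrow> 'a \<times> 'b)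
    \<Rightarrow> 'a \<times> 'b \<Rightarrow> 'a \<times> 'b \<Rightarrow> 'a \<times> 'b \<Rightarrow> 'a \<times> 'b" where
  "twist sc H T a b c =
     (\<Sum>k\<in>{k. \<exists>xs. length xs = 3 \<and> ((X_hatH sc H 1) ^^ k) (theta_cochain T) xs \<noteq> 0}.
        sc (inverse (fact k)) (((X_hatH sc H 1) ^^ k) (theta_cochain T) [a, b, c]))"

end

theory Submission
  imports Defs
begin

lemma shuffles_00: "shuffles 0 0 = {id}"
  by (auto simp: shuffles_def)
lemma shuffles_10: "shuffles 1 0 = {id}"
proof -
  have "{..<Suc 0} = {0::nat}" by auto
  then show ?thesis by (auto simp: shuffles_def)
qed
lemma shuffles_01: "shuffles 0 1 = {id}"
proof -
  have "{..<Suc 0} = {0::nat}" by auto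
  then show ?thesis by (auto simp: shuffles_def)
qed

lemma X_hatH_eq:
  assumes one: "\<And>v. sc 1 v = v"
  shows "X_hatH sc H 1 P xs =
    P [hatH H [xs!0], xs!1, xs!2] + P [xs!0, hatH H [xs!1], xs!2] + P [xs!0, xs!1, hatH H [xs!2]]
    - hatH H [P [xs!0, xs!1, xs!2]]"
  using shuffles_00 shuffles_10 shuffles_01
  by (simp add: X_hatH_def LTS_bracket_def circ_def
      one argpair_def mk_args_def numeral_eq_Suc Let_def)


definition Nm :: "('b \<Rightarrow> 'a) \<Rightarrow> 'a \<times> 'b \<Rightarrow> 'a \<times> 'b::zero" where
  "Nm H v = (H (snd v), 0)"

definition Xt :: "('v \<Rightarrow> 'v) \<Rightarrow> ('v \<Rightarrow> 'v \<Rightarrow> 'v \<Rightarrow> 'v::ab_group_add) \<Rightarrow> 'v \<Rightarrow> 'v \<Rightarrow> 'v \<Rightarrow> 'v" where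
  "Xt N e x y z = e (N x) y z + e x (N y) z + e x y (N z) - N (e x y z)"

definition ee :: "('v \<Rightarrow> 'v \<Rightarrow> 'v \<Rightarrow> 'v::ab_group_add) \<Rightarrow> ('v \<Rightarrow> 'v) \<Rightarrow> nat \<Rightarrow> 'v \<Rightarrow> 'v \<Rightarrow> 'v \<Rightarrow> 'v" where
  "ee T N k x y z = (let A0 = T x y z;
      A1 = T (N x) y z + T x (N y) z + T x y (N z);
      A2 = T (N x) (N y) z + T (N x) y (N z) + T x (N y) (N z);
      A3 = T (N x) (N y) (N z) in
    (if k = 0 then A0 else if k = 1 then A1 - N A0 else if k = 2 then A2 - N A1
     else if k = 3 then A3 - N A2 else if k = 4 then - N A3 else 0))"

lemma lift_iter:
  assumes one: "\<And>v. sc 1 v = v"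
  shows "((X_hatH sc H 1) ^^ k) (theta_cochain T) xs = ((Xt (Nm H)) ^^ k) T (xs!0) (xs!1) (xs!2)"
proof (induction k arbitrary: xs)
  case 0
  then show ?case by (simp add: theta_cochain_def)
next
  case (Suc k)
  have h: "hatH H [v] = Nm H v" for v by (simp add: hatH_def Nm_def)
  show ?case
    apply (simp only: funpow.simps comp_apply)
    apply (subst X_hatH_eq[where sc=sc, OF one])
    apply (simp only: Suc.IH)
    apply (simp only: h Xt_def[of _ "(Xt (Nm H) ^^ k) T"])
    apply simp
    done
qed

definition fm :: "('b \<Rightarrow> 'a) \<Rightarrow> 'a \<times> 'b \<Rightarrow> 'a::ab_group_add \<times> 'b::ab_group_add" where
  "fm H v = v + Nm H v"
definition gm :: "('b \<Rightarrow> 'a) \<Rightarrow> 'a \<times> 'b \<Rightarrow> 'a::ab_group_add \<times> 'b::ab_group_add" where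
  "gm H v = v - Nm H v"

context
  fixes s1 :: "'k::field_char_0 \<Rightarrow> 'a::ab_group_add \<Rightarrow> 'a"
    and s2 :: "'k \<Rightarrow> 'b::ab_group_add \<Rightarrow> 'b"
    and T :: "'a \<times> 'b \<Rightarrow> 'a \<times> 'b \<Rightarrow> 'a \<times> 'b \<Rightarrow> 'a \<times> 'b"
    and H :: "'b \<Rightarrow> 'a"
  assumes vs1: "vector_space s1" and vs2: "vector_space s2"
    and lts: "is_LTS (prod_scale s1 s2) T"
    and linH: "Vector_Spaces.linear s2 s1 H"
begin

lemma vs: "vector_space (prod_scale s1 s2)"
proof -
  have "Vector_Spaces.linear (prod_scale s1 s2) (prod_scale s1 s2) (\<lambda>x. T x 0 0)"
    using lts unfolding is_LTS_def trilinear_def by blast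
  then show ?thesis unfolding Vector_Spaces.linear_def by blast
qed

lemma mvs: "module (prod_scale s1 s2)" using vs module_iff_vector_space by blast
lemma mvs2: "module s2" using vs2 module_iff_vector_space by blast

lemma mhH: "module_hom s2 s1 H" using linH by (simp add: module_hom_iff_linear)

lemma H_add[simp]: "H (a + b) = H a + H b" by (rule module_hom.add[OF mhH])
lemma H_0[simp]: "H 0 = 0" by (rule module_hom.zero[OF mhH])
lemma H_diff[simp]: "H (a - b) = H a - H b" by (rule module_hom.diff[OF mhH])
lemma H_neg[simp]: "H (- a) = - H a" by (rule module_hom.neg[OF mhH])
lemma H_scale[simp]: "H (s2 c a) = s1 c (H a)" by (rule module_hom.scale[OF mhH])

lemma N_add[simp]: "Nm H (v + w) = Nm H v + Nm H w" by (simp add: Nm_def)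
lemma N_diff[simp]: "Nm H (v - w) = Nm H v - Nm H w" by (simp add: Nm_def)
lemma N_neg[simp]: "Nm H (- v) = - Nm H v" by (simp add: Nm_def)
lemma N_0[simp]: "Nm H 0 = 0" by (simp add: Nm_def zero_prod_def)
lemma NN[simp]: "Nm H (Nm H v) = 0" by (simp add: Nm_def zero_prod_def)
lemma N_scale[simp]: "Nm H (prod_scale s1 s2 c v) = prod_scale s1 s2 c (Nm H v)"
  using module.scale_zero_right[OF mvs2] by (simp add: Nm_def prod_scale_def)

lemma mh1: "module_hom (prod_scale s1 s2) (prod_scale s1 s2) (\<lambda>x. T x y z)"
  using lts unfolding is_LTS_def trilinear_def module_hom_iff_linear by blast
lemma mh2: "module_hom (prod_scale s1 s2) (prod_scale s1 s2) (\<lambda>y. T x y z)"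
  using lts unfolding is_LTS_def trilinear_def module_hom_iff_linear by blast
lemma mh3: "module_hom (prod_scale s1 s2) (prod_scale s1 s2) (\<lambda>z. T x y z)"
  using lts unfolding is_LTS_def trilinear_def module_hom_iff_linear by blast

lemma T_add[simp]: "T (a + b) y z = T a y z + T b y z" "T x (a + b) z = T x a z + T x b z"
   "T x y (a + b) = T x y a + T x y b"
  using module_hom.add[OF mh1] module_hom.add[OF mh2] module_hom.add[OF mh3] by auto
lemma T_diff[simp]: "T (a - b) y z = T a y z - T b y z" "T x (a - b) z = T x a z - T x b z"
   "T x y (a - b) = T x y a - T x y b"
  using module_hom.diff[OF mh1] module_hom.diff[OF mh2] module_hom.diff[OF mh3] by auto
lemma T_neg[simp]: "T (- a) y z = - T a y z" "T x (- a) z = - T x a z"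
   "T x y (- a) = - T x y a"
  using module_hom.neg[OF mh1] module_hom.neg[OF mh2] module_hom.neg[OF mh3] by auto
lemma T_0[simp]: "T 0 y z = 0" "T x 0 z = 0" "T x y 0 = 0"
  using module_hom.zero[OF mh1] module_hom.zero[OF mh2] module_hom.zero[OF mh3] by auto

lemma sc_one[simp]: "prod_scale s1 s2 1 v = v"
  using module.scale_one[OF mvs] by simp

lemma sc_num:
  "prod_scale s1 s2 2 v = v + v"
  "prod_scale s1 s2 3 v = v + v + v"
  "prod_scale s1 s2 4 v = v + v + v + v"
proof -
  have a: "prod_scale s1 s2 (a + b) v = prod_scale s1 s2 a v + prod_scale s1 s2 b v" for a b
    by (rule module.scale_left_distrib[OF mvs])
  show "prod_scale s1 s2 2 v = v + v" using a[of 1 1] by simp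
  show "prod_scale s1 s2 3 v = v + v + v" using a[of 2 1] a[of 1 1] by simp
  show "prod_scale s1 s2 4 v = v + v + v + v" using a[of 3 1] a[of 2 1] a[of 1 1] by simp
qed

lemma Xt_step: "Xt (Nm H) (ee T (Nm H) k) = (\<lambda>x y z. prod_scale s1 s2 (of_nat (Suc k)) (ee T (Nm H) (Suc k) x y z))"
proof -
  consider "k = 0" | "k = 1" | "k = 2" | "k = 3" | "k = 4" | "k \<ge> 5" by linarith
  then show ?thesis
  proof cases
    case 1 then show ?thesis by (simp add: fun_eq_iff Xt_def ee_def)
  next
    case 2 then show ?thesis by (simp add: fun_eq_iff Xt_def ee_def sc_num algebra_simps)
  next
    case 3 then show ?thesis by (simp add: fun_eq_iff Xt_def ee_def sc_num algebra_simps)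
  next
    case 4 then show ?thesis by (simp add: fun_eq_iff Xt_def ee_def sc_num algebra_simps)
  next
    case 5 then show ?thesis
      using module.scale_zero_right[OF mvs] by (simp add: fun_eq_iff Xt_def ee_def)
  next
    case 6 then show ?thesis
      using module.scale_zero_right[OF mvs] by (simp add: fun_eq_iff Xt_def ee_def)
  qed
qed

lemma Xt_scale: "Xt (Nm H) (\<lambda>x y z. prod_scale s1 s2 c (e x y z)) =
   (\<lambda>x y z. prod_scale s1 s2 c (Xt (Nm H) e x y z))"
  by (simp add: fun_eq_iff Xt_def module.scale_right_distrib[OF mvs] module.scale_right_diff_distrib[OF mvs])

lemma iter: "(Xt (Nm H) ^^ k) T = (\<lambda>x y z. prod_scale s1 s2 (of_nat (fact k)) (ee T (Nm H) k x y z))"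
proof (induction k)
  case 0
  then show ?case by (simp add: fun_eq_iff ee_def)
next
  case (Suc k)
  show ?case
    by (simp add: Suc Xt_scale Xt_step module.scale_scale[OF mvs] algebra_simps)
qed

lemma twist_eq: "twist (prod_scale s1 s2) H T a b c = gm H (T (fm H a) (fm H b) (fm H c))"
proof -
  let ?S = "{k. \<exists>xs. length xs = 3 \<and> ((X_hatH (prod_scale s1 s2) H 1) ^^ k) (theta_cochain T) xs \<noteq> 0}"
  let ?F = "\<lambda>k. prod_scale s1 s2 (inverse (fact k)) (((X_hatH (prod_scale s1 s2) H 1) ^^ k) (theta_cochain T) [a, b, c])"
  have L: "((X_hatH (prod_scale s1 s2) H 1) ^^ k) (theta_cochain T) xs =
     prod_scale s1 s2 (of_nat (fact k)) (ee T (Nm H) k (xs!0) (xs!1) (xs!2))" for k xs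
    using lift_iter[where sc="prod_scale s1 s2", OF sc_one] iter by simp
  have sub: "?S \<subseteq> {..4}"
  proof
    fix k assume "k \<in> ?S"
    then obtain xs where "((X_hatH (prod_scale s1 s2) H 1) ^^ k) (theta_cochain T) xs \<noteq> 0" by blast
    then have "ee T (Nm H) k (xs!0) (xs!1) (xs!2) \<noteq> 0"
      unfolding L using module.scale_zero_right[OF mvs] by auto
    then show "k \<in> {..4}" by (auto simp: ee_def Let_def split: if_splits)
  qed
  have F: "?F k = ee T (Nm H) k a b c" for k
  proof -
    have "(fact k :: 'k) \<noteq> 0" by simp
    then show ?thesis unfolding L by (simp add: module.scale_scale[OF mvs] of_nat_fact)
  qed
  have "twist (prod_scale s1 s2) H T a b c = sum ?F ?S" by (simp add: twist_def)
  also have "\<dots> = sum ?F {..4}"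
  proof (rule sum.mono_neutral_left[OF _ sub])
    show "\<forall>i\<in>{..4} - ?S. ?F i = 0"
      using module.scale_zero_right[OF mvs] by auto
  qed simp
  also have "\<dots> = (\<Sum>k\<in>{..4}. ee T (Nm H) k a b c)" using F by simp
  also have "\<dots> = gm H (T (fm H a) (fm H b) (fm H c))"
    by (simp add: numeral_eq_Suc ee_def Let_def fm_def gm_def algebra_simps)
  finally show ?thesis .
qed

lemma lin_fm: "Vector_Spaces.linear (prod_scale s1 s2) (prod_scale s1 s2) (fm H)"
  unfolding Vector_Spaces.linear_iff using vs
  by (simp add: fm_def module.scale_right_distrib[OF mvs] algebra_simps)

lemma lin_gm: "Vector_Spaces.linear (prod_scale s1 s2) (prod_scale s1 s2) (gm H)"
  unfolding Vector_Spaces.linear_iff using vs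
  by (simp add: gm_def module.scale_right_diff_distrib[OF mvs] algebra_simps)

lemma fg[simp]: "fm H (gm H v) = v" by (simp add: fm_def gm_def)
lemma gf[simp]: "gm H (fm H v) = v" by (simp add: fm_def gm_def)
lemma gm_add[simp]: "gm H (v + w) = gm H v + gm H w" by (simp add: gm_def algebra_simps)
lemma gm_0[simp]: "gm H 0 = 0" by (simp add: gm_def)

lemma linT1: "Vector_Spaces.linear (prod_scale s1 s2) (prod_scale s1 s2) (\<lambda>x. T x y z)"
  using lts unfolding is_LTS_def trilinear_def by blast
lemma linT2: "Vector_Spaces.linear (prod_scale s1 s2) (prod_scale s1 s2) (\<lambda>y. T x y z)"
  using lts unfolding is_LTS_def trilinear_def by blast
lemma linT3: "Vector_Spaces.linear (prod_scale s1 s2) (prod_scale s1 s2) (\<lambda>z. T x y z)"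
  using lts unfolding is_LTS_def trilinear_def by blast

lemma lts_T1: "is_LTS (prod_scale s1 s2) (\<lambda>a b c. gm H (T (fm H a) (fm H b) (fm H c)))"
proof -
  have ax1: "T x x y = 0" for x y using lts unfolding is_LTS_def by blast
  have ax2: "T x y z + T y z x + T z x y = 0" for x y z using lts unfolding is_LTS_def by blast
  have ax3: "T x y (T z w t) = T (T x y z) w t + T z (T x y w) t + T z w (T x y t)" for x y z w t
    using lts unfolding is_LTS_def by blast
  have c: "Vector_Spaces.linear (prod_scale s1 s2) (prod_scale s1 s2) (gm H \<circ> (L \<circ> fm H))"
    if "Vector_Spaces.linear (prod_scale s1 s2) (prod_scale s1 s2) L" for L
    by (rule Vector_Spaces.linear_compose[OF Vector_Spaces.linear_compose[OF lin_fm that] lin_gm])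
  have t1: "Vector_Spaces.linear (prod_scale s1 s2) (prod_scale s1 s2) (\<lambda>x. gm H (T (fm H x) (fm H y) (fm H z)))" for y z
    using c[OF linT1[of "fm H y" "fm H z"]] by (simp add: o_def)
  have t2: "Vector_Spaces.linear (prod_scale s1 s2) (prod_scale s1 s2) (\<lambda>y. gm H (T (fm H x) (fm H y) (fm H z)))" for x z
    using c[OF linT2[of "fm H x" "fm H z"]] by (simp add: o_def)
  have t3: "Vector_Spaces.linear (prod_scale s1 s2) (prod_scale s1 s2) (\<lambda>z. gm H (T (fm H x) (fm H y) (fm H z)))" for x y
    using c[OF linT3[of "fm H x" "fm H y"]] by (simp add: o_def)
  show ?thesis
    unfolding is_LTS_def trilinear_def
  proof (intro conjI allI)
    fix x y z w t
    show "gm H (T (fm H x) (fm H x) (fm H y)) = 0" by (simp add: ax1)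
    show "gm H (T (fm H x) (fm H y) (fm H z)) + gm H (T (fm H y) (fm H z) (fm H x))
        + gm H (T (fm H z) (fm H x) (fm H y)) = 0"
      by (simp only: gm_add[symmetric] ax2 gm_0)
    show "gm H (T (fm H x) (fm H y) (fm H (gm H (T (fm H z) (fm H w) (fm H t))))) =
      gm H (T (fm H (gm H (T (fm H x) (fm H y) (fm H z)))) (fm H w) (fm H t)) +
      gm H (T (fm H z) (fm H (gm H (T (fm H x) (fm H y) (fm H w)))) (fm H t)) +
      gm H (T (fm H z) (fm H w) (fm H (gm H (T (fm H x) (fm H y) (fm H t)))))"
      by (simp only: fg gm_add[symmetric] ax3[of "fm H x" "fm H y" "fm H z" "fm H w" "fm H t"])
  qed (use t1 t2 t3 in auto)
qed

lemma main: "LTS_iso (prod_scale s1 s2) (twist (prod_scale s1 s2) H T) T (\<lambda>(x, u). (x + H u, u))"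
proof -
  have tw: "twist (prod_scale s1 s2) H T = (\<lambda>a b c. gm H (T (fm H a) (fm H b) (fm H c)))"
    by (simp add: fun_eq_iff twist_eq)
  have f: "(\<lambda>(x, u). (x + H u, u)) = fm H" by (auto simp: fun_eq_iff fm_def Nm_def)
  have b: "bij (fm H)" by (rule o_bij[of "gm H"]) (auto simp: fun_eq_iff)
  show ?thesis unfolding LTS_iso_def tw f
    using lts_T1 lts lin_fm b by simp
qed

end

theorem corollary4p4:
  fixes s1 :: "'k::field_char_0 \<Rightarrow> 'a::ab_group_add \<Rightarrow> 'a"
    and s2 :: "'k \<Rightarrow> 'b::ab_group_add \<Rightarrow> 'b"
    and T :: "'a \<times> 'b \<Rightarrow> 'a \<times> 'b \<Rightarrow> 'a \<times> 'b \<Rightarrow> 'a \<times> 'b"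
    and H :: "'b \<Rightarrow> 'a"
  assumes "vector_space s1" and "vector_space s2"
    and "is_LTS (prod_scale s1 s2) T"
    and "Vector_Spaces.linear s2 s1 H"
  shows "LTS_iso (prod_scale s1 s2) (twist (prod_scale s1 s2) H T) T
           (\<lambda>(x, u). (x + H u, u))"
  by (rule main[OF assms])

end
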